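(* Let $n=2$ and assume $\lfloor (M_1+M_2)/p\rfloor=1$ (ample reduction). Let $I^{[1]}(z_1,z_2)\in\mathbb{F}_p[z_1,z_2]^2$ be the coefficient of $x^{p-1}$ in $(x-z_1)^{M_1}(x-z_2)^{M_2}\Big(\frac{e_1}{x-z_1}+\frac{e_2}{x-z_2}\Big)$. Then $$I^{[1]}(z_1,z_2)=(-1)^{M_2}(z_2-z_1)^{M_1+M_2-p}\frac{\Gamma_{\mathbb{F}_p}(M_1+1)\Gamma_{\mathbb{F}_p}(M_2+1)}{\Gamma_{\mathbb{F}_p}(M_1+M_2-p+1)}\Big(\frac{e_1}{M_1}-\frac{e_2}{M_2}\Big) =(-1)^{M_1}(z_1-z_2)^{M_1+M_2-p}\frac{\Gamma_{\mathbb{F}_p}(M_1+1)\Gamma_{\mathbb{F}_p}(M_2+1)}{\Gamma_{\mathbb{F}_p}(M_1+M_2-p+1)}\Big(\frac{e_2}{M_2}-\frac{e_1}{M_1}\Big).$$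
   Context: Let $p,q$ be primes with $p>q$ and $p>2$. Fix positive integers $m_1,m_2<q$, and let $M_i$ be the least positive integer with $M_i\equiv -m_iq^{-1}\pmod p$ ($1\le M_i\le p-1$); in formulas over $\mathbb{F}_p$, $M_i$ denotes its residue. $e_1,e_2$ is the standard basis of $\mathbb{F}_p^2$. For an integer $1\le x\le p$, $\Gamma_{\mathbb{F}_p}(x)\in\mathbb{F}_p$ denotes the residue of $(-1)^{x-1}(x-1)!$. *)

theory Defs
  imports "HOL-Computational_Algebra.Polynomial" "HOL-Number_Theory.Cong"
begin

definition Mres :: "nat \<Rightarrow> nat \<Rightarrow> nat \<Rightarrow> nat" where
  "Mres p q m = (LEAST M. 0 < M \<and> [M * q + m = 0] (mod p))"

(* Gamma_{F_p}(x) = residue of (-1)^(x-1) (x-1)!, mapped into a ring of characteristic p *)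
definition GammaFp :: "nat \<Rightarrow> 'a :: comm_ring_1" where
  "GammaFp x = of_int ((-1) ^ (x - 1) * fact (x - 1))"

(* I^[1](z1,z2): coefficient of x^(p-1) in
   (x-z1)^M1 (x-z2)^M2 (e1/(x-z1) + e2/(x-z2)), given componentwise as a pair
   (e1-component, e2-component) *)
definition I1 :: "nat \<Rightarrow> nat \<Rightarrow> nat \<Rightarrow> 'a :: comm_ring_1 \<Rightarrow> 'a \<Rightarrow> 'a \<times> 'a" where
  "I1 p M1 M2 z1 z2 =
     (coeff ([:-z1, 1:] ^ (M1 - 1) * [:-z2, 1:] ^ M2) (p - 1),
      coeff ([:-z1, 1:] ^ M1 * [:-z2, 1:] ^ (M2 - 1)) (p - 1))"

end

theory Submission
  imports Defs "HOL-Number_Theory.Residues"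
begin

lemma Mres_bounds:
  assumes p: "prime p" and "0 < q" "q < p" "0 < m" "m < p"
  shows "0 < Mres p q m \<and> Mres p q m < p"
proof -
  have cop: "coprime q p" using assms by (simp add: prime_imp_coprime_nat coprime_commute nat_dvd_not_less)
  then obtain x where x: "[q * x = Suc 0] (mod p)" using cong_solve_coprime_nat by blast
  define M0 where "M0 = x * ((p - 1) * m) + p"
  have "M0 * q + m = (q * x) * ((p - 1) * m) + p * q + m"
    by (simp add: M0_def algebra_simps)
  hence "[M0 * q + m = (q * x) * ((p - 1) * m) + p * q + m] (mod p)" by simp
  also have "[(q * x) * ((p - 1) * m) + p * q + m = Suc 0 * ((p - 1) * m) + p * q + m] (mod p)"
    by (intro cong_add cong_mult x cong_refl)
  also have "Suc 0 * ((p - 1) * m) + p * q + m = p * (m + q)"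
    using prime_gt_0_nat[OF p] by (cases p) (auto simp: algebra_simps)
  also have "[p * (m + q) = 0] (mod p)" by (simp add: cong_def)
  finally have P0: "0 < M0 \<and> [M0 * q + m = 0] (mod p)" using assms M0_def by simp
  let ?P = "\<lambda>M. 0 < M \<and> [M * q + m = 0] (mod p)"
  have PM: "?P (Mres p q m)" unfolding Mres_def by (rule LeastI[of ?P, OF P0])
  have le: "\<And>M. ?P M \<Longrightarrow> Mres p q m \<le> M" unfolding Mres_def by (rule Least_le)
  have "Mres p q m \<noteq> p"
  proof
    assume "Mres p q m = p"
    with PM have "[p * q + m = 0] (mod p)" by simp
    hence "p dvd m" by (simp add: cong_0_iff dvd_add_right_iff)
    with assms show False by (simp add: nat_dvd_not_less)
  qed
  moreover have "\<not> Mres p q m > p"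
  proof
    assume g: "Mres p q m > p"
    have e: "Mres p q m = (Mres p q m - p) + p" using g by simp
    have "Mres p q m * q + m = (Mres p q m - p) * q + m + q * p"
      by (subst e) (simp add: algebra_simps)
    hence "[(Mres p q m - p) * q + m + q * p = 0] (mod p)" using PM by (simp add: add_ac)
    hence "[(Mres p q m - p) * q + m = 0] (mod p)"
      unfolding cong_def by (simp only: mod_mult_self1)
    hence "Mres p q m \<le> Mres p q m - p" using g by (intro le) simp
    thus False using g assms prime_gt_0_nat[OF p] by linarith
  qed
  ultimately show ?thesis using PM by simp
qed

lemma choose_zero_char:
  assumes p: "prime p" and c: "CHAR('a::comm_ring_1) = p" and "p \<le> j" "j \<le> 2*p - 2"
  shows "(of_nat (j choose (p - 1)) :: 'a) = 0"
proof -
  have "fact (p - 1) * fact (j - (p - 1)) * (j choose (p - 1)) = fact j"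
    using assms by (intro binomial_fact_lemma) simp
  moreover have "p dvd fact j" using assms prime_dvd_fact_iff by blast
  ultimately have "p dvd fact (p - 1) * fact (j - (p - 1)) * (j choose (p - 1))" by simp
  moreover have "\<not> p dvd fact (p - 1)" using prime_gt_0_nat[OF p] by (simp add: prime_dvd_fact_iff[OF p])
  moreover have "\<not> p dvd fact (j - (p - 1))" using assms prime_gt_0_nat[OF p] by (simp add: prime_dvd_fact_iff[OF p])
  ultimately have "p dvd (j choose (p - 1))" using p by (simp add: prime_dvd_mult_iff)
  thus ?thesis using c by (simp add: of_nat_eq_0_iff_char_dvd)
qed

lemma coeff_lin_pow:
  assumes p: "prime p" and c: "CHAR('a::comm_ring_1) = p" and "j \<le> 2*p - 2"
  shows "Polynomial.coeff ([:z::'a, 1:] ^ j) (p - 1) = (if j = p - 1 then 1 else 0)"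
proof (cases "j < p - 1")
  case True thus ?thesis
    by (simp add: coeff_eq_0 degree_linear_power)
next
  case False
  show ?thesis
  proof (cases "j = p - 1")
    case True thus ?thesis by (simp add: coeff_linear_power)
  next
    case F: False
    with False have "p \<le> j" by simp
    thus ?thesis using F False assms choose_zero_char[OF p c, of j]
      by (simp add: coeff_linear_poly_power)
  qed
qed

lemma coeff_prod:
  assumes p: "prime p" and c: "CHAR('a::comm_ring_1) = p"
    and "a \<le> p - 1" "p - 1 \<le> a + b" "b \<le> p - 1"
  shows "Polynomial.coeff ([:-z1, 1:] ^ a * [:-z2, 1:] ^ b) (p - 1)
         = of_nat (b choose (p - 1 - a)) * ((z1::'a) - z2) ^ (a + b - (p - 1))"
proof -
  define L where "L = [:-z1, 1:]"
  define d where "d = z1 - z2"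
  have e: "[:-z2, 1:] = L + [:d:]" by (simp add: L_def d_def)
  have t: "Polynomial.coeff (L ^ a * (of_nat (b choose k) * L ^ k * [:d:] ^ (b - k))) n
     = of_nat (b choose k) * d ^ (b - k) * Polynomial.coeff (L ^ (a + k)) n" for k n
  proof -
    have "L ^ a * (of_nat (b choose k) * L ^ k * [:d:] ^ (b - k))
       = [:of_nat (b choose k) * d ^ (b - k):] * L ^ (a + k)"
      by (simp add: of_nat_poly poly_const_pow power_add mult_ac)
    thus ?thesis by simp
  qed
  have "Polynomial.coeff ([:-z1, 1:] ^ a * [:-z2, 1:] ^ b) (p - 1)
      = Polynomial.coeff (L ^ a * (L + [:d:]) ^ b) (p - 1)" by (simp add: e L_def)
  also have "\<dots> = (\<Sum>k\<le>b. of_nat (b choose k) * d ^ (b - k) * Polynomial.coeff (L ^ (a + k)) (p - 1))"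
    by (simp only: binomial_ring sum_distrib_left coeff_sum t)
  also have "\<dots> = (\<Sum>k\<le>b. of_nat (b choose k) * d ^ (b - k) * (if k = p - 1 - a then 1 else 0))"
  proof (rule sum.cong[OF refl])
    fix k assume "k \<in> {..b}"
    hence "a + k \<le> 2 * p - 2" using assms by auto
    hence "Polynomial.coeff (L ^ (a + k)) (p - 1) = (if a + k = p - 1 then 1 else 0)"
      unfolding L_def by (rule coeff_lin_pow[OF p c])
    moreover have "(a + k = p - 1) = (k = p - 1 - a)" using assms by auto
    ultimately show "of_nat (b choose k) * d ^ (b - k) * Polynomial.coeff (L ^ (a + k)) (p - 1)
      = of_nat (b choose k) * d ^ (b - k) * (if k = p - 1 - a then 1 else 0)" by simp
  qed
  also have "\<dots> = of_nat (b choose (p - 1 - a)) * d ^ (b - (p - 1 - a))"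
    using assms by (simp add: if_distrib sum.delta cong: if_cong)
  also have "b - (p - 1 - a) = a + b - (p - 1)" using assms by simp
  finally show ?thesis by (simp add: d_def)
qed

lemma wilson_field:
  assumes p: "prime p" and c: "CHAR('a::comm_ring_1) = p" and "r \<le> p - 1"
  shows "(of_nat (fact r) * of_nat (fact (p - 1 - r)) :: 'a) = (-1) ^ (r + 1)"
  using assms(3)
proof (induction r)
  case 0
  have "[fact (p - 1) = - 1] (mod int p)" using wilson_theorem[OF p] by simp
  hence "int p dvd fact (p - 1) - (- 1)" by (simp only: cong_iff_dvd_diff)
  hence "int CHAR('a) dvd fact (p - 1) + 1" using c by simp
  hence "int CHAR('a) dvd int (fact (p - 1)) + 1" by (simp add: of_nat_fact)
  hence "(of_int (int (fact (p - 1)) + 1) :: 'a) = 0" by (simp only: of_int_eq_0_iff_char_dvd)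
  hence "(of_nat (fact (p - 1)) :: 'a) + 1 = 0" by (simp only: of_int_add of_int_of_nat_eq of_int_1)
  hence "(of_nat (fact (p - 1)) :: 'a) = -1" by (simp only: eq_neg_iff_add_eq_0)
  thus ?case by simp
next
  case (Suc r)
  have "p - 1 - r = Suc (p - 1 - Suc r)" using Suc.prems by simp
  hence f: "(of_nat (fact (p - 1 - r)) :: 'a) = of_nat (p - 1 - r) * of_nat (fact (p - 1 - Suc r))"
    by (simp only: fact_Suc of_nat_mult of_nat_id)
  have "(of_nat (p - 1 - r) :: 'a) = of_nat p - of_nat (Suc r)"
    using Suc.prems by (simp add: of_nat_diff)
  also have "(of_nat p :: 'a) = 0" using c of_nat_CHAR[where 'a='a] by simp
  finally have g: "(of_nat (p - 1 - r) :: 'a) = - of_nat (Suc r)" by simp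
  have IH: "(of_nat (fact r) * of_nat (fact (p - 1 - r)) :: 'a) = (-1) ^ (r + 1)" using Suc by simp
  have "(of_nat (fact (Suc r)) * of_nat (fact (p - 1 - Suc r)) :: 'a)
      = - (of_nat (fact r) * of_nat (fact (p - 1 - r)))"
    unfolding f g fact_Suc of_nat_mult of_nat_id by (simp add: algebra_simps)
  thus ?case using IH by simp
qed


lemma alg_final:
  fixes B1 B2 A1 A2 FN m1 m2 s1 s2 sN D E :: "'a::field"
  assumes FN: "FN \<noteq> 0" and m1: "m1 \<noteq> 0" and m2: "m2 \<noteq> 0"
    and s1: "s1 * s1 = 1" and s2: "s2 * s2 = 1" and sN: "sN * sN = 1"
    and ss: "s1 * s2 = - sN"
    and b1: "B1 * s1 * FN = A1 * (m2 * A2)"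
    and b2: "B2 * (- s1) * FN = (m1 * A1) * A2"
    and E: "E = sN * D"
  shows "B1 * D = s2 * E * ((s1 * (m1 * A1)) * (s2 * (m2 * A2)) / (sN * FN)) * (1 / m1)"
    and "B2 * D = s2 * E * ((s1 * (m1 * A1)) * (s2 * (m2 * A2)) / (sN * FN)) * (- (1 / m2))"
    and "B1 * D = s1 * D * ((s1 * (m1 * A1)) * (s2 * (m2 * A2)) / (sN * FN)) * (- (1 / m1))"
    and "B2 * D = s1 * D * ((s1 * (m1 * A1)) * (s2 * (m2 * A2)) / (sN * FN)) * (1 / m2)"
proof -
  have pm: "x = 1 \<or> x = -1" if "x * x = 1" for x :: 'a
  proof -
    have "(x - 1) * (x + 1) = 0" using that by (simp add: algebra_simps)
    thus ?thesis by (simp add: eq_neg_iff_add_eq_0)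
  qed
  have sN': "sN = - (s1 * s2)" using ss by simp
  have B1: "B1 = s1 * A1 * (m2 * A2) / FN"
  proof -
    have "B1 = (B1 * s1 * FN) * s1 / FN" using FN s1 by (simp add: mult.assoc mult.left_commute)
    thus ?thesis unfolding b1 by (simp add: mult.commute mult.left_commute)
  qed
  have B2: "B2 = - s1 * (m1 * A1) * A2 / FN"
  proof -
    have "B2 = (B2 * (- s1) * FN) * (- s1) / FN" using FN s1 by (simp add: mult.assoc mult.left_commute)
    thus ?thesis unfolding b2 by (simp add: mult.commute mult.left_commute)
  qed
  have c1: "s1 = 1 \<or> s1 = -1" and c2: "s2 = 1 \<or> s2 = -1" using pm s1 s2 by auto
  show "B1 * D = s2 * E * ((s1 * (m1 * A1)) * (s2 * (m2 * A2)) / (sN * FN)) * (1 / m1)"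
    unfolding B1 E sN' using c1 c2 FN m1 by (elim disjE) (simp_all add: field_simps)
  show "B2 * D = s2 * E * ((s1 * (m1 * A1)) * (s2 * (m2 * A2)) / (sN * FN)) * (- (1 / m2))"
    unfolding B2 E sN' using c1 c2 FN m2 by (elim disjE) (simp_all add: field_simps)
  show "B1 * D = s1 * D * ((s1 * (m1 * A1)) * (s2 * (m2 * A2)) / (sN * FN)) * (- (1 / m1))"
    unfolding B1 sN' using c1 c2 FN m1 by (elim disjE) (simp_all add: field_simps)
  show "B2 * D = s1 * D * ((s1 * (m1 * A1)) * (s2 * (m2 * A2)) / (sN * FN)) * (1 / m2)"
    unfolding B2 sN' using c1 c2 FN m2 by (elim disjE) (simp_all add: field_simps)
qed

theorem theorem4p4:
  fixes p q m1 m2 :: nat and z1 z2 :: "'a :: field"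
  assumes "prime p" and "prime q" and "p > q" and "p > 2"
    and "0 < m1" and "m1 < q" and "0 < m2" and "m2 < q"
    and "CHAR('a) = p"
    and "(Mres p q m1 + Mres p q m2) div p = 1"
  shows "let M1 = Mres p q m1; M2 = Mres p q m2;
             C = GammaFp (M1 + 1) * GammaFp (M2 + 1) / (GammaFp (M1 + M2 - p + 1) :: 'a)
         in I1 p M1 M2 z1 z2 =
              ((-1) ^ M2 * (z2 - z1) ^ (M1 + M2 - p) * C * (1 / of_nat M1),
               (-1) ^ M2 * (z2 - z1) ^ (M1 + M2 - p) * C * (- (1 / of_nat M2)))
          \<and> I1 p M1 M2 z1 z2 =
              ((-1) ^ M1 * (z1 - z2) ^ (M1 + M2 - p) * C * (- (1 / of_nat M1)),
               (-1) ^ M1 * (z1 - z2) ^ (M1 + M2 - p) * C * (1 / of_nat M2))"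
proof -
  note p = assms(1) and c = assms(9)
  define M1 where "M1 = Mres p q m1"
  define M2 where "M2 = Mres p q m2"
  define N where "N = M1 + M2 - p"
  have q0: "0 < q" using assms(2) prime_gt_0_nat by blast
  have "m1 < p" "m2 < p" using assms(3,6,8) by linarith+
  hence bM1: "0 < M1 \<and> M1 < p" and bM2: "0 < M2 \<and> M2 < p" unfolding M1_def M2_def
    using Mres_bounds[OF p q0 assms(3) assms(5)] Mres_bounds[OF p q0 assms(3) assms(7)] by blast+
  have ge: "p \<le> M1 + M2"
  proof (rule ccontr)
    assume "\<not> p \<le> M1 + M2"
    hence "(M1 + M2) div p = 0" by simp
    thus False using assms(10) unfolding M1_def M2_def by simp
  qed
  have Np: "N < p" using bM1 bM2 unfolding N_def by linarith
  have nz: "(of_nat n :: 'a) \<noteq> 0" if "0 < n" "n < p" for n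
    using that c by (simp add: of_nat_eq_0_iff_char_dvd nat_dvd_not_less)
  have FN: "(of_nat (fact N) :: 'a) \<noteq> 0"
  proof
    assume "(of_nat (fact N) :: 'a) = 0"
    hence "p dvd fact N" using c by (simp add: of_nat_eq_0_iff_char_dvd)
    thus False using Np prime_dvd_fact_iff[OF p] by simp
  qed
  have G: "GammaFp (n + 1) = ((-1) ^ n * of_nat (fact n) :: 'a)" for n
  proof -
    have fi: "(fact n :: int) = int (fact n)" by (rule of_nat_fact[symmetric])
    show ?thesis unfolding GammaFp_def add_diff_cancel_right' fi
      by (simp only: of_int_mult of_int_power of_int_minus of_int_1 of_int_of_nat_eq)
  qed
  have I: "I1 p M1 M2 z1 z2 =
     (of_nat (M2 choose (p - M1)) * (z1 - z2) ^ N,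
      of_nat ((M2 - 1) choose (p - 1 - M1)) * (z1 - z2) ^ N)"
  proof -
    have "Polynomial.coeff ([:-z1, 1:] ^ (M1 - 1) * [:-z2, 1:] ^ M2) (p - 1)
      = of_nat (M2 choose (p - 1 - (M1 - 1))) * (z1 - z2) ^ (M1 - 1 + M2 - (p - 1))"
      using bM1 bM2 ge by (intro coeff_prod[OF p c]) auto
    moreover have "Polynomial.coeff ([:-z1, 1:] ^ M1 * [:-z2, 1:] ^ (M2 - 1)) (p - 1)
      = of_nat ((M2 - 1) choose (p - 1 - M1)) * (z1 - z2) ^ (M1 + (M2 - 1) - (p - 1))"
      using bM1 bM2 ge by (intro coeff_prod[OF p c]) auto
    moreover have "p - 1 - (M1 - 1) = p - M1" "M1 - 1 + M2 - (p - 1) = N"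
      "M1 + (M2 - 1) - (p - 1) = N" using bM1 bM2 ge unfolding N_def by auto
    ultimately show ?thesis unfolding I1_def by simp
  qed
  have b1: "fact (p - M1) * fact N * (M2 choose (p - M1)) = fact M2"
  proof -
    have "M2 - (p - M1) = N" using bM1 bM2 ge unfolding N_def by auto
    thus ?thesis using binomial_fact_lemma[of "p - M1" M2] bM1 bM2 ge by simp
  qed
  have b2: "fact (p - 1 - M1) * fact N * ((M2 - 1) choose (p - 1 - M1)) = fact (M2 - 1)"
  proof -
    have "M2 - 1 - (p - 1 - M1) = N" using bM1 bM2 ge unfolding N_def by auto
    thus ?thesis using binomial_fact_lemma[of "p - 1 - M1" "M2 - 1"] bM1 bM2 ge by simp
  qed
  have w1: "(of_nat (fact (M1 - 1)) * of_nat (fact (p - M1)) :: 'a) = (-1) ^ M1"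
  proof -
    have "(of_nat (fact (M1 - 1)) * of_nat (fact (p - 1 - (M1 - 1))) :: 'a) = (-1) ^ (M1 - 1 + 1)"
      using bM1 by (intro wilson_field[OF p c]) auto
    moreover have "p - 1 - (M1 - 1) = p - M1" "M1 - 1 + 1 = M1" using bM1 by auto
    ultimately show ?thesis by simp
  qed
  have w2: "(of_nat (fact M1) * of_nat (fact (p - 1 - M1)) :: 'a) = - ((-1) ^ M1)"
  proof -
    have "M1 \<le> p - 1" using bM1 by linarith
    from wilson_field[OF p c this] show ?thesis by simp
  qed
  have fM1: "(of_nat (fact M1) :: 'a) = of_nat M1 * of_nat (fact (M1 - 1))"
    using bM1 by (simp add: fact_reduce[of M1])
  have fM2: "(of_nat (fact M2) :: 'a) = of_nat M2 * of_nat (fact (M2 - 1))"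
    using bM2 by (simp add: fact_reduce[of M2])
  define B1 where "B1 = (of_nat (M2 choose (p - M1)) :: 'a)"
  define B2 where "B2 = (of_nat ((M2 - 1) choose (p - 1 - M1)) :: 'a)"
  define A1 where "A1 = (of_nat (fact (M1 - 1)) :: 'a)"
  define A2 where "A2 = (of_nat (fact (M2 - 1)) :: 'a)"
  define F where "F = (of_nat (fact N) :: 'a)"
  have e1: "B1 * (-1) ^ M1 * F = A1 * (of_nat M2 * A2)"
  proof -
    have "(of_nat (fact (p - M1)) * F * B1 :: 'a) = of_nat M2 * A2"
      unfolding F_def B1_def A2_def using arg_cong[OF b1, of "of_nat :: nat \<Rightarrow> 'a"] fM2
      by (simp only: of_nat_mult)
    hence h: "A1 * (of_nat (fact (p - M1)) * F * B1) = A1 * (of_nat M2 * A2)" by simp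
    have "B1 * (-1) ^ M1 * F = B1 * (A1 * of_nat (fact (p - M1))) * F"
      using w1 unfolding A1_def by simp
    also have "\<dots> = A1 * (of_nat (fact (p - M1)) * F * B1)" by (simp only: mult_ac)
    finally show ?thesis using h by simp
  qed
  have e2: "B2 * (- ((-1) ^ M1)) * F = (of_nat M1 * A1) * A2"
  proof -
    have "(of_nat (fact (p - 1 - M1)) * F * B2 :: 'a) = A2"
      unfolding F_def B2_def A2_def using arg_cong[OF b2, of "of_nat :: nat \<Rightarrow> 'a"]
      by (simp only: of_nat_mult)
    hence h: "of_nat (fact M1) * (of_nat (fact (p - 1 - M1)) * F * B2) = of_nat (fact M1) * A2" by simp
    have "B2 * (- ((-1) ^ M1)) * F = B2 * (of_nat (fact M1) * of_nat (fact (p - 1 - M1))) * F"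
      using w2 by simp
    also have "\<dots> = of_nat (fact M1) * (of_nat (fact (p - 1 - M1)) * F * B2)" by (simp only: mult_ac)
    finally show ?thesis using h fM1 unfolding A1_def by simp
  qed
  have ss: "((-1::'a) ^ M1) * (-1) ^ M2 = - ((-1) ^ N)"
  proof -
    have "M1 + M2 = N + p" using ge unfolding N_def by simp
    hence "((-1::'a) ^ M1) * (-1) ^ M2 = (-1) ^ N * (-1) ^ p" by (simp flip: power_add)
    moreover have "odd p" using p assms(4) by (metis prime_odd_nat)
    ultimately show ?thesis by simp
  qed
  have E: "(z2 - z1) ^ N = (-1) ^ N * (z1 - z2) ^ N"
  proof -
    have "z2 - z1 = - (z1 - z2)" by simp
    show ?thesis unfolding \<open>z2 - z1 = - (z1 - z2)\<close> by (rule power_minus)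
  qed
  have sq: "((-1::'a) ^ n) * (-1) ^ n = 1" for n
    by (simp flip: power_mult_distrib)
  note A = alg_final[OF FN[folded F_def] nz[OF conjunct1[OF bM1] conjunct2[OF bM1]] nz[OF conjunct1[OF bM2] conjunct2[OF bM2]] sq sq sq ss e1 e2 E]
  have M1M2: "M1 + M2 - p = N" unfolding N_def ..
  show ?thesis
    unfolding Let_def M1_def[symmetric] M2_def[symmetric] M1M2 I G fM1 fM2
      B1_def[symmetric] B2_def[symmetric] A1_def[symmetric] A2_def[symmetric] F_def[symmetric] prod.inject
    by (intro conjI A)
qed

end
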